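(* For every positive integer $n$, $$b^{2}_{8,5}(4n+1)\equiv 2\,b^{2}_{2,5}(n)\pmod{10}.$$
   Context: For integers $r\ge1$ write $f_r=\prod_{i\ge1}(1-q^{ri})$. For coprime positive integers $\ell,m$ and a positive integer $k$, $b^{k}_{\ell,m}(n)$ denotes the number of $k$-colored partitions of $n$ into parts not divisible by $\ell$ or by $m$, i.e. $\sum_{n\ge0} b^{k}_{\ell,m}(n)q^n=\dfrac{f_\ell^k f_m^k}{f_1^k f_{\ell m}^k}$. Thus $\sum b^2_{8,5}(n)q^n=\dfrac{f_8^2f_5^2}{f_1^2f_{40}^2}$ and $\sum b^2_{2,5}(n)q^n=\dfrac{f_2^2f_5^2}{f_1^2f_{10}^2}$. *)

theory Defs
  imports "HOL-Computational_Algebra.Formal_Power_Series" "HOL-Number_Theory.Cong"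
begin

(* f_r = prod_{i>=1} (1 - q^{r i}) as an integer formal power series.
   The n-th coefficient of the infinite product equals that of the finite
   product over 1 <= i <= n (factors with i > n only affect degrees > n, r >= 1). *)
definition eta_f :: "nat \<Rightarrow> int fps" where
  "eta_f r = Abs_fps (\<lambda>n. fps_nth (\<Prod>i\<in>{1..n}. (1 - fps_X ^ (r * i) :: int fps)) n)"

definition b_gen :: "nat \<Rightarrow> nat \<Rightarrow> nat \<Rightarrow> int fps" where
  "b_gen k l m = eta_f l ^ k * eta_f m ^ k *
     fps_right_inverse (eta_f 1 ^ k * eta_f (l * m) ^ k) 1"

definition b :: "nat \<Rightarrow> nat \<Rightarrow> nat \<Rightarrow> nat \<Rightarrow> int" where
  "b k l m n = fps_nth (b_gen k l m) n"

end

theory Submission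
  imports Defs
begin

unbundle fps_syntax



definition eqt :: "nat \<Rightarrow> int fps \<Rightarrow> int fps \<Rightarrow> bool" where
  "eqt L A B \<longleftrightarrow> (\<forall>n<L. A $ n = B $ n)"

lemma eqt_refl[simp]: "eqt L A A" by (simp add: eqt_def)
lemma eqt_sym: "eqt L A B \<Longrightarrow> eqt L B A" by (simp add: eqt_def)
lemma eqt_trans: "eqt L A B \<Longrightarrow> eqt L B C \<Longrightarrow> eqt L A C" by (simp add: eqt_def)
lemma eqt_mono: "eqt L A B \<Longrightarrow> M \<le> L \<Longrightarrow> eqt M A B" by (simp add: eqt_def)
lemma eqt_add: "eqt L A B \<Longrightarrow> eqt L C D \<Longrightarrow> eqt L (A + C) (B + D)" by (simp add: eqt_def)
lemma eqt_diff: "eqt L A B \<Longrightarrow> eqt L C D \<Longrightarrow> eqt L (A - C) (B - D)" by (simp add: eqt_def)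
lemma eqt_mult: assumes "eqt L A B" "eqt L C D" shows "eqt L (A * C) (B * D)"
  unfolding eqt_def
proof (intro allI impI)
  fix n assume n: "n < L"
  show "(A * C) $ n = (B * D) $ n" unfolding fps_mult_nth
    by (rule sum.cong) (use assms n in \<open>auto simp: eqt_def\<close>)
qed
lemma eqt_power: "eqt L A B \<Longrightarrow> eqt L (A ^ k) (B ^ k)"
  by (induction k) (auto intro: eqt_mult)
lemma eqt_prod: "(\<And>i. i \<in> I \<Longrightarrow> eqt L (f i) (g i)) \<Longrightarrow> eqt L (prod f I) (prod g I)"
proof (induction I rule: infinite_finite_induct)
  case (insert x F) then show ?case by (auto intro: eqt_mult)
qed auto
lemma eqt_all: "(\<And>L. eqt L A B) \<Longrightarrow> A = B"
  by (rule fps_ext) (auto simp: eqt_def)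

definition dil :: "nat \<Rightarrow> int fps \<Rightarrow> int fps" where
  "dil k A = Abs_fps (\<lambda>n. if k dvd n then A $ (n div k) else 0)"

lemma dil_nth: "dil k A $ n = (if k dvd n then A $ (n div k) else 0)"
  by (simp add: dil_def)

lemma mult_dil_nth:
  assumes k: "k > 0"
  shows "(A * dil k W) $ m = (\<Sum>j=0..m div k. A $ (m - k*j) * W $ j)"
proof -
  have "(A * dil k W) $ m = (dil k W * A) $ m" by (simp add: mult.commute)
  also have "\<dots> = (\<Sum>i=0..m. dil k W $ i * A $ (m - i))" by (rule fps_mult_nth)
  also have "\<dots> = (\<Sum>i\<in>(\<lambda>j. k*j) ` {0..m div k}. dil k W $ i * A $ (m - i))"
  proof (rule sum.mono_neutral_right)
    show "(\<lambda>j. k*j) ` {0..m div k} \<subseteq> {0..m}"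
      using k by auto (metis div_times_less_eq_dividend mult.commute order_trans mult_le_mono2)
    show "\<forall>i\<in>{0..m} - (\<lambda>j. k*j) ` {0..m div k}. dil k W $ i * A $ (m - i) = 0"
    proof
      fix i assume i: "i \<in> {0..m} - (\<lambda>j. k*j) ` {0..m div k}"
      show "dil k W $ i * A $ (m - i) = 0"
      proof (cases "k dvd i")
        case True then obtain j where j: "i = k*j" by auto
        with i k have "j \<le> m div k" by (auto simp: div_le_mono le_div_geq) (metis div_le_mono nonzero_mult_div_cancel_left not_gr0 le_0_eq)
        with i j show ?thesis by auto
      qed (simp add: dil_nth)
    qed
  qed auto
  also have "\<dots> = (\<Sum>j=0..m div k. dil k W $ (k*j) * A $ (m - k*j))"
    by (subst sum.reindex) (use k in \<open>auto simp: inj_on_def\<close>)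
  also have "\<dots> = (\<Sum>j=0..m div k. A $ (m - k*j) * W $ j)"
    using k by (simp add: dil_nth mult.commute)
  finally show ?thesis .
qed

lemma dil_mult: assumes k: "k > 0" shows "dil k (A * B) = dil k A * dil k B"
proof (rule fps_ext)
  fix n
  show "dil k (A * B) $ n = (dil k A * dil k B) $ n"
  proof (cases "k dvd n")
    case True
    then obtain m where m: "n = k * m" by auto
    have "(dil k A * dil k B) $ n = (\<Sum>j=0..m. dil k A $ (n - k*j) * B $ j)"
      using k by (simp add: mult_dil_nth m)
    also have "\<dots> = (\<Sum>j=0..m. A $ (m - j) * B $ j)"
    proof (rule sum.cong)
      fix j assume "j \<in> {0..m}"
      then have "n - k*j = k*(m - j)" by (simp add: m right_diff_distrib')
      then show "dil k A $ (n - k*j) * B $ j = A $ (m - j) * B $ j" using k by (simp add: dil_nth)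
    qed auto
    also have "\<dots> = (B * A) $ m" unfolding fps_mult_nth by (rule sum.cong) (auto simp: mult.commute)
    finally show ?thesis using k by (simp add: dil_nth m mult.commute)
  next
    case False
    have "(dil k A * dil k B) $ n = 0" unfolding fps_mult_nth
    proof (rule sum.neutral, intro ballI)
      fix i assume "i \<in> {0..n}"
      then have "k dvd i \<Longrightarrow> k dvd (n - i) \<Longrightarrow> k dvd n"
        by (metis atLeastAtMost_iff dvd_add le_add_diff_inverse)
      then show "dil k A $ i * dil k B $ (n - i) = 0" using False by (auto simp: dil_nth)
    qed
    then show ?thesis using False by (simp add: dil_nth)
  qed
qed

lemma dil_add: "dil k (A + B) = dil k A + dil k B" by (rule fps_ext) (simp add: dil_nth)
lemma dil_diff: "dil k (A - B) = dil k A - dil k B" by (rule fps_ext) (simp add: dil_nth)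
lemma dil_one: "k > 0 \<Longrightarrow> dil k 1 = 1" by (rule fps_ext) (auto simp: dil_nth)
lemma dil_const: "k > 0 \<Longrightarrow> dil k (fps_const c) = fps_const c" by (rule fps_ext) (auto simp: dil_nth)
lemma dil_power: "k > 0 \<Longrightarrow> dil k (A ^ m) = dil k A ^ m"
  by (induction m) (auto simp: dil_one dil_mult)
lemma dil_X: "k > 0 \<Longrightarrow> dil k fps_X = fps_X ^ k"
  by (rule fps_ext) (auto simp: dil_nth fps_X_nth)
lemma dil_Xp: "k > 0 \<Longrightarrow> dil k (fps_X ^ m) = fps_X ^ (k*m)"
  by (simp add: dil_power dil_X power_mult)
lemma dil_dil: "k > 0 \<Longrightarrow> j > 0 \<Longrightarrow> dil k (dil j A) = dil (k*j) A"
  by (rule fps_ext) (auto simp: dil_nth div_mult2_eq dvd_mult_div_cancel mult.commute dvd_div_iff_mult)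
lemma dil_prod: "k > 0 \<Longrightarrow> dil k (prod f I) = prod (\<lambda>i. dil k (f i)) I"
  by (induction I rule: infinite_finite_induct) (auto simp: dil_one dil_mult)

definition sg :: "int fps \<Rightarrow> int fps" where
  "sg A = Abs_fps (\<lambda>n. (-1)^n * A $ n)"
lemma sg_nth: "sg A $ n = (-1)^n * A $ n" by (simp add: sg_def)
lemma sg_mult: "sg (A * B) = sg A * sg B"
proof (rule fps_ext)
  fix n
  show "sg (A * B) $ n = (sg A * sg B) $ n"
    unfolding sg_nth fps_mult_nth sum_distrib_left
  proof (rule sum.cong)
    fix i assume "i \<in> {0..n}"
    then have "(-1::int)^n = (-1)^i * (-1)^(n-i)" by (simp flip: power_add)
    then show "(-1) ^ n * (A $ i * B $ (n - i)) = (-1) ^ i * A $ i * ((-1) ^ (n - i) * B $ (n - i))"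
      by (simp add: algebra_simps)
  qed auto
qed
lemma sg_add: "sg (A + B) = sg A + sg B" by (rule fps_ext) (simp add: sg_nth algebra_simps)
lemma sg_diff: "sg (A - B) = sg A - sg B" by (rule fps_ext) (simp add: sg_nth algebra_simps)
lemma sg_one: "sg 1 = 1" by (rule fps_ext) (simp add: sg_nth)
lemma sg_const: "sg (fps_const c) = fps_const c" by (rule fps_ext) (simp add: sg_nth)
lemma sg_power: "sg (A ^ m) = sg A ^ m" by (induction m) (auto simp: sg_one sg_mult)
lemma sg_X: "sg fps_X = - fps_X" by (rule fps_ext) (simp add: sg_nth fps_X_nth)
lemma sg_dil2: "sg (dil 2 A) = dil 2 A" by (rule fps_ext) (auto simp: sg_nth dil_nth)
lemma sg_prod: "sg (prod f I) = prod (\<lambda>i. sg (f i)) I"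
  by (induction I rule: infinite_finite_induct) (auto simp: sg_one sg_mult)



abbreviation XX :: "int fps" where "XX \<equiv> fps_X"

lemma eqt_dil: assumes "eqt L A B" "k > 0" shows "eqt L (dil k A) (dil k B)"
  unfolding eqt_def
proof (intro allI impI)
  fix n assume "n < L"
  then have "n div k < L" by (meson div_le_dividend le_less_trans)
  then show "dil k A $ n = dil k B $ n" using assms by (auto simp: dil_nth eqt_def)
qed

lemma eqt_sg: "eqt L A B \<Longrightarrow> eqt L (sg A) (sg B)" by (simp add: eqt_def sg_nth)

lemma eqt_Xpow_zero: "L \<le> m \<Longrightarrow> eqt L (XX ^ m * A) 0"
  by (simp add: eqt_def fps_X_power_mult_nth)

lemma eqt_one_minus: "L \<le> m \<Longrightarrow> eqt L (1 - XX ^ m) 1"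
  by (simp add: eqt_def)

lemma eqt_cancel:
  assumes "eqt L (E * A) (E * B)" "E $ 0 = 1"
  shows "eqt L A B"
proof -
  define U where "U = fps_right_inverse E 1"
  have EU: "E * U = 1" unfolding U_def by (rule fps_right_inverse) (simp add: assms)
  have "eqt L (U * (E * A)) (U * (E * B))" by (rule eqt_mult[OF eqt_refl assms(1)])
  moreover have "U * (E * A) = A" "U * (E * B) = B" using EU by (simp_all add: mult.assoc[symmetric] mult.commute[of U E])
  ultimately show ?thesis by simp
qed

definition pp :: "nat \<Rightarrow> nat \<Rightarrow> int fps" where
  "pp r M = (\<Prod>i<M. 1 - XX ^ (r * Suc i))"

lemma pp_Suc: "pp r (Suc M) = pp r M * (1 - XX ^ (r * Suc M))"
  by (simp add: pp_def)
lemma pp_0[simp]: "pp r 0 = 1" by (simp add: pp_def)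
lemma pp_nth0: "r > 0 \<Longrightarrow> pp r M $ 0 = 1"
  by (induction M) (auto simp: pp_Suc)

lemma pp_stable:
  assumes r: "r > 0" and "M \<le> M'"
  shows "eqt (Suc M) (pp r M) (pp r M')"
  using assms(2)
proof (induction M' rule: dec_induct)
  case (step m)
  have "Suc m \<le> r * Suc m" using r by (cases r) auto
  then have "Suc M \<le> r * Suc m" using step by linarith
  then have "eqt (Suc M) (1 - XX ^ (r * Suc m)) 1" by (rule eqt_one_minus)
  then have "eqt (Suc M) (pp r m * (1 - XX ^ (r * Suc m))) (pp r M * 1)"
    by (rule eqt_mult[OF eqt_sym[OF step.IH]])
  then show ?case by (simp add: pp_Suc eqt_sym)
qed simp

lemma eta_nth_pp: "eta_f r $ n = pp r n $ n"
  by (simp add: eta_f_def pp_def prod.atLeast1_atMost_eq)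

lemma eta_pp:
  assumes r: "r > 0" and "L \<le> Suc M"
  shows "eqt L (eta_f r) (pp r M)"
  unfolding eqt_def
proof (intro allI impI)
  fix n assume "n < L"
  then have "n \<le> M" using assms by simp
  from pp_stable[OF r this] have "pp r n $ n = pp r M $ n" by (simp add: eqt_def)
  then show "eta_f r $ n = pp r M $ n" by (simp add: eta_nth_pp)
qed

lemma eta_nth0: "r > 0 \<Longrightarrow> eta_f r $ 0 = 1" by (simp add: eta_nth_pp pp_nth0)
lemma eta_nz: "r > 0 \<Longrightarrow> eta_f r \<noteq> 0" using eta_nth0[of r] by auto

lemma eqt_all_ge: assumes H: "\<And>L. L \<ge> K \<Longrightarrow> eqt L A B" shows "A = B"
proof (rule eqt_all)
  fix L
  have "eqt (max L K) A B" by (rule H) simp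
  then show "eqt L A B" by (rule eqt_mono) simp
qed

lemma dil_pp: "k > 0 \<Longrightarrow> dil k (pp r M) = pp (k * r) M"
  by (simp add: pp_def dil_prod dil_diff dil_one dil_Xp mult.assoc distrib_left)

lemma dil_eta: assumes "k > 0" "r > 0" shows "dil k (eta_f r) = eta_f (k * r)"
proof (rule eqt_all)
  fix L
  have "eqt L (dil k (eta_f r)) (dil k (pp r L))" by (rule eqt_dil[OF eta_pp]) (use assms in auto)
  moreover have "eqt L (eta_f (k*r)) (pp (k*r) L)" by (rule eta_pp) (use assms in auto)
  ultimately show "eqt L (dil k (eta_f r)) (eta_f (k * r))"
    using assms dil_pp[of k r L] by (metis eqt_sym eqt_trans)
qed

definition limf :: "(nat \<Rightarrow> int fps) \<Rightarrow> int fps" where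
  "limf F = Abs_fps (\<lambda>n. F (Suc n) $ n)"

lemma limf_eqt:
  assumes st: "\<And>N M. Suc N \<le> M \<Longrightarrow> eqt (Suc N) (F (Suc N)) (F M)" and "L \<le> M"
  shows "eqt L (limf F) (F M)"
  unfolding eqt_def
proof (intro allI impI)
  fix n assume "n < L"
  with st[of n M] assms(2) show "limf F $ n = F M $ n" by (simp add: limf_def eqt_def)
qed

lemma psum_stable:
  fixes c :: "nat \<Rightarrow> int" and e :: "nat \<Rightarrow> nat"
  assumes e: "\<And>k. e k \<ge> k" and "Suc N \<le> M"
  shows "eqt (Suc N) (\<Sum>k<Suc N. fps_const (c k) * XX ^ e k) (\<Sum>k<M. fps_const (c k) * XX ^ e k)"
  using assms(2)
proof (induction M rule: dec_induct)
  case (step m)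
  have "Suc N \<le> e m" using step e by (meson le_trans)
  then have "eqt (Suc N) (XX ^ e m * fps_const (c m)) 0" by (rule eqt_Xpow_zero)
  then have "eqt (Suc N) (fps_const (c m) * XX ^ e m) 0" by (simp add: mult.commute)
  from eqt_add[OF step.IH eqt_sym[OF this]] show ?case by simp
qed simp

definition psf :: "(nat \<Rightarrow> int) \<Rightarrow> (nat \<Rightarrow> nat) \<Rightarrow> nat \<Rightarrow> int fps" where
  "psf c e N = (\<Sum>k<N. fps_const (c k) * XX ^ e k)"

lemma psf_lim: "(\<And>k. e k \<ge> k) \<Longrightarrow> L \<le> M \<Longrightarrow> eqt L (limf (psf c e)) (psf c e M)"
  unfolding psf_def by (rule limf_eqt) (rule psum_stable, auto)

lemma psf_Suc: "psf c e (Suc N) = psf c e N + fps_const (c N) * XX ^ e N"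
  by (simp add: psf_def)

fun tri :: "nat \<Rightarrow> nat" where
  "tri 0 = 0" | "tri (Suc n) = tri n + n"

lemma tri_eq: "2 * tri n + n = n * n"
  by (induction n) auto

lemma tri_ge: "tri (Suc k) \<ge> k"
  by (induction k) auto

definition pc :: "nat \<Rightarrow> int" where "pc k = (if k = 0 then 1 else 2 * (-1)^k)"
definition phc :: "nat \<Rightarrow> int" where "phc k = (if k = 0 then 1 else 2)"

definition sqe :: "nat \<Rightarrow> nat" where "sqe k = k * k"
definition tre :: "nat \<Rightarrow> nat" where "tre k = tri (Suc k)"

definition Pm :: "int fps" where "Pm = limf (psf pc sqe)"
definition Ph :: "int fps" where "Ph = limf (psf phc sqe)"
definition Ps :: "int fps" where "Ps = limf (psf (\<lambda>_. 2) tre)"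

lemma sqe_ge: "sqe k \<ge> k" by (simp add: sqe_def)
lemma tre_ge: "tre k \<ge> k" by (simp add: tre_def tri_ge)

lemma Pm_eqt: "L \<le> M \<Longrightarrow> eqt L Pm (psf pc sqe M)" unfolding Pm_def by (rule psf_lim[OF sqe_ge])
lemma Ph_eqt: "L \<le> M \<Longrightarrow> eqt L Ph (psf phc sqe M)" unfolding Ph_def by (rule psf_lim[OF sqe_ge])
lemma Ps_eqt: "L \<le> M \<Longrightarrow> eqt L Ps (psf (\<lambda>_. 2) tre M)" unfolding Ps_def by (rule psf_lim[OF tre_ge])

lemma sg_zero: "sg 0 = 0" by (rule fps_ext) (simp add: sg_nth)
lemma sg_sum: "sg (sum f I) = sum (\<lambda>i. sg (f i)) I"
  by (induction I rule: infinite_finite_induct) (auto simp: sg_add sg_zero)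

lemma sg_term: "sg (fps_const c * XX ^ m) = fps_const ((-1)^m * c) * XX ^ m"
  by (rule fps_ext) (simp add: sg_nth)

lemma neg1_sq: "(-1::int) ^ (k * k) = (-1) ^ k"
  by (cases "even k") (simp_all add: power_mult)

lemma neg1_sq2: "(-1::int)^x * (c * (-1)^x) = c"
proof -
  have "(-1::int)^x * (-1)^x = 1" by (simp flip: power_add)
  then show ?thesis by (metis mult.left_commute mult.right_neutral)
qed

lemma sg_Pm: "sg Pm = Ph"
proof (rule eqt_all)
  fix L
  have "sg (psf pc sqe L) = psf phc sqe L"
    unfolding psf_def sg_sum sg_term
    by (rule sum.cong) (auto simp: pc_def phc_def sqe_def neg1_sq neg1_sq2)
  then show "eqt L (sg Pm) Ph"
    using eqt_sg[OF Pm_eqt[of L L]] Ph_eqt[of L L] by (metis eqt_sym eqt_trans order_refl)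
qed



lemma dil_zero: "dil k 0 = 0" by (rule fps_ext) (simp add: dil_nth)
lemma dil_sum: "dil k (sum f I) = sum (\<lambda>i. dil k (f i)) I"
  by (induction I rule: infinite_finite_induct) (auto simp: dil_add dil_zero)

lemma dil_term: "k > 0 \<Longrightarrow> dil k (fps_const c * XX ^ m) = fps_const c * XX ^ (k * m)"
  by (simp add: dil_mult dil_const dil_Xp)

lemma dil_psf: "k > 0 \<Longrightarrow> dil k (psf c e N) = psf c (\<lambda>j. k * e j) N"
  by (simp add: psf_def dil_sum dil_term)

lemma a_fin: "psf pc sqe (2*N+1) = psf phc (\<lambda>j. 4 * sqe j) (Suc N) - XX * psf (\<lambda>_. 2) (\<lambda>j. 8 * tre j) N"
proof (induction N)
  case 0
  then show ?case by (simp add: psf_def pc_def phc_def sqe_def)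
next
  case (Suc N)
  have e1: "2 * Suc N + 1 = Suc (Suc (2*N+1))" by simp
  have p1: "pc (2*N+1) = -2" by (simp add: pc_def)
  have p2: "pc (Suc (2*N+1)) = 2" by (simp add: pc_def)
  have t: "2 * tri N + N = N * N" by (rule tri_eq)
  have s1: "sqe (2*N+1) = Suc (8 * tre N)" using t by (simp add: sqe_def tre_def algebra_simps)
  have s2: "sqe (Suc (2*N+1)) = 4 * sqe (Suc N)" by (simp add: sqe_def algebra_simps)
  have "psf pc sqe (2 * Suc N + 1) = psf pc sqe (2*N+1) + fps_const (-2) * XX ^ (Suc (8 * tre N))
          + fps_const 2 * XX ^ (4 * sqe (Suc N))"
    unfolding e1 psf_Suc p1 p2 s1 s2 by simp
  also have "\<dots> = psf phc (\<lambda>j. 4 * sqe j) (Suc (Suc N)) - XX * psf (\<lambda>_. 2) (\<lambda>j. 8 * tre j) (Suc N)"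
  proof -
    have c1: "fps_const (-2::int) = - fps_const 2" by simp
    have c2: "XX ^ (Suc (8 * tre N)) = XX * XX ^ (8 * tre N)" by simp
    have c3: "fps_const (phc (Suc N)) = fps_const 2" by (simp add: phc_def)
    show ?thesis unfolding Suc psf_Suc[of phc _ "Suc N"] psf_Suc[of "\<lambda>_. 2" _ N] c1 c2 c3
      by algebra
  qed
  finally show ?case .
qed

lemma a_ident: "Pm = dil 4 Ph - XX * dil 8 Ps"
proof (rule eqt_all)
  fix L
  have "eqt L Pm (psf pc sqe (2*L+1))" by (rule Pm_eqt) simp
  moreover have "eqt L (dil 4 Ph) (dil 4 (psf phc sqe (Suc L)))" by (rule eqt_dil[OF Ph_eqt]) auto
  moreover have "eqt L (XX * dil 8 Ps) (XX * dil 8 (psf (\<lambda>_. 2) tre L))"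
    by (rule eqt_mult[OF eqt_refl eqt_dil[OF Ps_eqt]]) auto
  ultimately have h: "eqt L Pm (psf pc sqe (2*L+1))"
    "eqt L (dil 4 Ph - XX * dil 8 Ps) (dil 4 (psf phc sqe (Suc L)) - XX * dil 8 (psf (\<lambda>_. 2) tre L))"
    by (auto intro: eqt_diff)
  have "dil 4 (psf phc sqe (Suc L)) - XX * dil 8 (psf (\<lambda>_. 2) tre L) = psf pc sqe (2*L+1)"
    using a_fin[of L] by (simp add: dil_psf)
  with h show "eqt L Pm (dil 4 Ph - XX * dil 8 Ps)"
    using eqt_sym eqt_trans by metis
qed

lemma sgX_odd: "sg (XX ^ (Suc (2*N))) = - (XX ^ (Suc (2*N)))"
proof (rule fps_ext)
  fix n show "sg (XX ^ (Suc (2*N))) $ n = (- (XX ^ (Suc (2*N)))) $ n"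
    by (cases "n = Suc (2*N)") (auto simp: sg_nth)
qed
lemma sgX_even: "sg (XX ^ (2*N)) = XX ^ (2*N)" by (rule fps_ext) (simp add: sg_nth)

lemma sg_pp_fin: "sg (pp 1 (2*N)) * pp 1 (2*N) * pp 4 N = pp 2 N ^ 2 * pp 2 (2*N)"
proof (induction N)
  case 0 then show ?case by (simp add: sg_one)
next
  case (Suc N)
  define a :: "int fps" where "a = XX ^ (Suc (2*N))"
  define b :: "int fps" where "b = XX ^ (2 * Suc N)"
  have e: "2 * Suc N = Suc (Suc (2*N))" by simp
  have x1: "XX ^ (1 * Suc (2*N)) = a" by (simp add: a_def)
  have x2: "XX ^ (1 * Suc (Suc (2*N))) = b" by (simp add: b_def)
  have x3: "XX ^ (2 * Suc N) = b" by (simp add: b_def)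
  have x4: "XX ^ (2 * Suc (2*N)) = a * a" by (simp add: a_def flip: power_add)
  have x5: "XX ^ (2 * Suc (Suc (2*N))) = b * b" by (simp add: b_def flip: power_add)
  have x6: "XX ^ (4 * Suc N) = b * b" unfolding b_def power_add[symmetric]
    by (rule arg_cong[where f="\<lambda>m. XX^m"]) simp
  have sa: "sg a = - a" unfolding a_def by (rule sgX_odd)
  have sb: "sg b = b" unfolding b_def by (rule sgX_even)
  have sgexp: "sg (pp 1 (2*Suc N)) = sg (pp 1 (2*N)) * (1 + a) * (1 - b)"
    unfolding e pp_Suc x1 x2 by (simp add: sg_mult sg_diff sg_one sa sb)
  have p1: "pp 1 (2*Suc N) = pp 1 (2*N) * (1 - a) * (1 - b)" unfolding e pp_Suc x1 x2 by simp
  have p4: "pp 4 (Suc N) = pp 4 N * (1 - b * b)" unfolding pp_Suc x6 by simp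
  have p2: "pp 2 (Suc N) = pp 2 N * (1 - b)" unfolding pp_Suc x3 by simp
  have p22: "pp 2 (2 * Suc N) = pp 2 (2*N) * (1 - a * a) * (1 - b * b)" unfolding e pp_Suc x4 x5 by simp
  show ?case unfolding sgexp unfolding p1 p4 p2 p22 using Suc.IH by algebra
qed

lemma sg_eta1: "sg (eta_f 1) * eta_f 1 * eta_f 4 = eta_f 2 ^ 3"
proof (rule eqt_all)
  fix L
  have h1: "eqt L (eta_f 1) (pp 1 (2*L))" by (rule eta_pp) auto
  have h2: "eqt L (eta_f 4) (pp 4 L)" by (rule eta_pp) auto
  have h3: "eqt L (eta_f 2) (pp 2 L)" by (rule eta_pp) auto
  have h4: "eqt L (eta_f 2) (pp 2 (2*L))" by (rule eta_pp) auto
  have "eqt L (sg (eta_f 1) * eta_f 1 * eta_f 4) (sg (pp 1 (2*L)) * pp 1 (2*L) * pp 4 L)"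
    by (intro eqt_mult eqt_sg h1 h2)
  moreover have "eqt L (eta_f 2 ^ 2 * eta_f 2) (pp 2 L ^ 2 * pp 2 (2*L))"
    by (intro eqt_mult eqt_power h3 h4)
  moreover have "eta_f 2 ^ 2 * eta_f 2 = eta_f 2 ^ 3" by (simp add: power3_eq_cube power2_eq_square)
  ultimately show "eqt L (sg (eta_f 1) * eta_f 1 * eta_f 4) (eta_f 2 ^ 3)"
    unfolding sg_pp_fin by (metis eqt_sym eqt_trans)
qed



fun gb :: "int fps \<Rightarrow> nat \<Rightarrow> nat \<Rightarrow> int fps" where
  "gb Q 0 j = (if j = 0 then 1 else 0)"
| "gb Q (Suc m) j = (if j = 0 then 1 else gb Q m (j - 1) + Q ^ j * gb Q m j)"

lemma gb_0[simp]: "gb Q m 0 = 1" by (cases m) auto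

lemma gb_gt: "m < j \<Longrightarrow> gb Q m j = 0"
  by (induction m arbitrary: j) auto

lemma gb_Suc_Suc: "gb Q (Suc m) (Suc j) = gb Q m j + Q ^ Suc j * gb Q m (Suc j)"
  by simp

lemma qbin:
  "(\<Prod>i<m. y + x * Q ^ i) = (\<Sum>j\<le>m. gb Q m j * Q ^ tri j * x ^ j * y ^ (m - j))"
proof (induction m arbitrary: x)
  case 0 then show ?case by simp
next
  case (Suc m)
  define a where "a j = gb Q m j * Q ^ tri j * Q ^ j" for j
  have am: "a (Suc m) = 0" by (simp add: a_def gb_gt)
  have "(\<Prod>i<Suc m. y + x * Q ^ i) = (y + x) * (\<Prod>i<m. y + (x * Q) * Q ^ i)"
    unfolding prod.lessThan_Suc_shift by (simp add: mult.assoc)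
  also have "\<dots> = (y + x) * (\<Sum>j\<le>m. a j * x ^ j * y ^ (m - j))"
    unfolding Suc.IH by (simp add: a_def power_mult_distrib mult.assoc mult.left_commute)
  also have "\<dots> = (\<Sum>j\<le>m. a j * x ^ j * y ^ (Suc m - j)) + (\<Sum>j\<le>m. a j * x ^ Suc j * y ^ (m - j))"
    unfolding sum.distrib[symmetric] sum_distrib_left
    by (rule sum.cong) (auto simp: Suc_diff_le algebra_simps)
  also have "(\<Sum>j\<le>m. a j * x ^ j * y ^ (Suc m - j)) = (\<Sum>j\<le>Suc m. a j * x ^ j * y ^ (Suc m - j))"
    by (simp add: am)
  also have "\<dots> = y ^ Suc m + (\<Sum>j\<le>m. a (Suc j) * x ^ Suc j * y ^ (m - j))"
    by (subst sum.atMost_Suc_shift) (simp add: a_def)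
  finally have L: "(\<Prod>i<Suc m. y + x * Q ^ i) = y ^ Suc m + (\<Sum>j\<le>m. a (Suc j) * x ^ Suc j * y ^ (m - j))
      + (\<Sum>j\<le>m. a j * x ^ Suc j * y ^ (m - j))" .
  have "(\<Sum>j\<le>Suc m. gb Q (Suc m) j * Q ^ tri j * x ^ j * y ^ (Suc m - j))
      = y ^ Suc m + (\<Sum>j\<le>m. gb Q (Suc m) (Suc j) * Q ^ tri (Suc j) * x ^ Suc j * y ^ (m - j))"
    by (subst sum.atMost_Suc_shift) simp
  also have "(\<Sum>j\<le>m. gb Q (Suc m) (Suc j) * Q ^ tri (Suc j) * x ^ Suc j * y ^ (m - j))
      = (\<Sum>j\<le>m. a (Suc j) * x ^ Suc j * y ^ (m - j) + a j * x ^ Suc j * y ^ (m - j))"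
    by (rule sum.cong) (simp_all add: a_def algebra_simps power_add)
  finally show ?case unfolding L sum.distrib by (simp add: add.assoc)
qed

definition qp :: "int fps \<Rightarrow> nat \<Rightarrow> int fps" where
  "qp Q k = (\<Prod>i<k. 1 - Q ^ Suc i)"

lemma qp_Suc: "qp Q (Suc k) = qp Q k * (1 - Q ^ Suc k)" by (simp add: qp_def)

lemma gb_prod: "j \<le> m \<Longrightarrow> gb Q m j * qp Q j * qp Q (m - j) = qp Q m"
proof (induction m arbitrary: j)
  case 0 then show ?case by (simp add: qp_def)
next
  case (Suc m)
  show ?case
  proof (cases j)
    case 0 then show ?thesis by (simp add: qp_def)
  next
    case (Suc j')
    with Suc.prems have j': "j' \<le> m" by simp
    have t1: "gb Q m j' * qp Q (Suc j') * qp Q (m - j') = qp Q m * (1 - Q ^ Suc j')"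
      using Suc.IH[OF j'] by (simp add: qp_Suc algebra_simps)
    have t2: "Q ^ Suc j' * gb Q m (Suc j') * qp Q (Suc j') * qp Q (m - j')
        = qp Q m * (Q ^ Suc j' - Q ^ Suc m)"
    proof (cases "j' = m")
      case True then show ?thesis by (simp add: gb_gt)
    next
      case False
      then have jm: "Suc j' \<le> m" using j' by simp
      then have mj: "m - j' = Suc (m - Suc j')" by simp
      have "Suc j' + Suc (m - Suc j') = Suc m" using jm by simp
      then have pw: "Q ^ Suc j' * Q ^ Suc (m - Suc j') = Q ^ Suc m"
        by (metis power_add)
      have "Q ^ Suc j' * gb Q m (Suc j') * qp Q (Suc j') * qp Q (m - j')
          = Q ^ Suc j' * (gb Q m (Suc j') * qp Q (Suc j') * qp Q (m - Suc j')) * (1 - Q ^ Suc (m - Suc j'))"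
        unfolding mj qp_Suc[of Q "m - Suc j'"] by (simp add: algebra_simps)
      also have "\<dots> = qp Q m * (Q ^ Suc j' - Q ^ Suc j' * Q ^ Suc (m - Suc j'))"
        unfolding Suc.IH[OF jm] by (simp add: algebra_simps)
      finally show ?thesis unfolding pw .
    qed
    have "gb Q (Suc m) j * qp Q j * qp Q (Suc m - j)
        = gb Q m j' * qp Q (Suc j') * qp Q (m - j') + Q ^ Suc j' * gb Q m (Suc j') * qp Q (Suc j') * qp Q (m - j')"
      unfolding Suc gb_Suc_Suc by (simp add: algebra_simps)
    also have "\<dots> = qp Q (Suc m)" unfolding t1 t2 by (simp add: qp_Suc algebra_simps)
    finally show ?thesis .
  qed
qed

lemma qp_pp: "qp (XX ^ s) k = pp s k"
  unfolding qp_def pp_def power_mult ..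

lemma gb_lim:
  assumes s: "s > 0" and "j \<le> m" "L \<le> j" "L \<le> m - j"
  shows "eqt L (gb (XX ^ s) m j * eta_f s) 1"
proof -
  define E where "E = eta_f s"
  have e1: "eqt L (qp (XX^s) j) E" unfolding E_def qp_pp
    by (rule eqt_sym, rule eta_pp) (use assms in auto)
  have e2: "eqt L (qp (XX^s) (m - j)) E" unfolding E_def qp_pp
    by (rule eqt_sym, rule eta_pp) (use assms in auto)
  have e3: "eqt L (qp (XX^s) m) E" unfolding E_def qp_pp
    by (rule eqt_sym, rule eta_pp) (use assms in auto)
  have "eqt L (gb (XX ^ s) m j * qp (XX^s) j * qp (XX^s) (m - j)) (gb (XX ^ s) m j * E * E)"
    by (intro eqt_mult e1 e2 eqt_refl)
  then have "eqt L (gb (XX ^ s) m j * E * E) E"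
    unfolding gb_prod[OF assms(2)] using e3 by (metis eqt_sym eqt_trans)
  then have "eqt L (E * (gb (XX ^ s) m j * E)) (E * 1)" by (simp add: ac_simps)
  then show ?thesis unfolding E_def by (rule eqt_cancel) (simp add: eta_nth0 s)
qed

lemma eqt_sum: "(\<And>i. i \<in> I \<Longrightarrow> eqt L (f i) (g i)) \<Longrightarrow> eqt L (sum f I) (sum g I)"
proof (induction I rule: infinite_finite_induct)
  case (insert x F) then show ?case by (auto intro: eqt_add)
qed auto

lemma sum_gb_lim:
  assumes s: "s > 0"
    and H: "\<And>j. j \<in> J \<Longrightarrow> ex j < L \<Longrightarrow> L \<le> j \<and> L \<le> m - j \<and> j \<le> m"
  shows "eqt L ((\<Sum>j\<in>J. fps_const (c j) * gb (XX ^ s) m j * XX ^ ex j) * eta_f s)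
                (\<Sum>j\<in>J. fps_const (c j) * XX ^ ex j)"
  unfolding sum_distrib_right
proof (rule eqt_sum)
  fix j assume j: "j \<in> J"
  show "eqt L (fps_const (c j) * gb (XX ^ s) m j * XX ^ ex j * eta_f s) (fps_const (c j) * XX ^ ex j)"
  proof (cases "ex j < L")
    case True
    with H[OF j] have "eqt L (gb (XX ^ s) m j * eta_f s) 1" by (intro gb_lim s) auto
    then have "eqt L (fps_const (c j) * XX ^ ex j * (gb (XX ^ s) m j * eta_f s)) (fps_const (c j) * XX ^ ex j * 1)"
      by (rule eqt_mult[OF eqt_refl])
    then show ?thesis by (simp add: ac_simps)
  next
    case False
    then have "eqt L (XX ^ ex j * (fps_const (c j) * gb (XX ^ s) m j * eta_f s)) 0"
      "eqt L (XX ^ ex j * fps_const (c j)) 0" by (auto intro: eqt_Xpow_zero)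
    then show ?thesis by (simp add: ac_simps) (metis eqt_sym eqt_trans)
  qed
qed



lemma prod_split_lt: "prod f {..<(a::nat)+r} = prod f {..<a} * (\<Prod>i<r. f (a+i))"
  by (induction r) (auto simp: mult.assoc)

lemma sum_split_lt: "sum f {..<(a::nat)+r} = sum f {..<a} + (\<Sum>i<r. f (a+i))"
  by (induction r) (auto simp: add.assoc)

lemma tri_sum: "tri K = (\<Sum>i<K. i)" by (induction K) auto

lemma tri_int: "int (2 * tri n) = int n * int n - int n"
  using tri_eq[of n] by (metis add_diff_cancel_right' of_nat_add of_nat_mult)

lemma Xpow_cancel: "XX ^ c * A = XX ^ c * B \<Longrightarrow> A = B"
  by simp

lemma const_pow: "(-1::int fps) ^ j = fps_const ((-1) ^ j)"
proof -
  have "(-1::int fps) = fps_const (-1)" by (simp flip: fps_const_neg)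
  then show ?thesis by (simp only: fps_const_power)
qed

definition po :: "nat \<Rightarrow> int fps" where "po K = (\<Prod>i<K. 1 - XX ^ (2*i+1))"

lemma po_pp: "po K * pp 2 K = pp 1 (2*K)"
proof (induction K)
  case 0 then show ?case by (simp add: po_def)
next
  case (Suc K)
  have e: "2 * Suc K = Suc (Suc (2*K))" by simp
  have "po (Suc K) * pp 2 (Suc K) = (po K * pp 2 K) * ((1 - XX ^ (2*K+1)) * (1 - XX ^ (2 * Suc K)))"
    by (simp add: po_def pp_Suc ac_simps)
  also have "\<dots> = pp 1 (2 * Suc K)" unfolding Suc unfolding e pp_Suc by (simp add: ac_simps mult_2 mult_2_right)
  finally show ?case .
qed

definition dd :: "nat \<Rightarrow> nat \<Rightarrow> nat" where "dd K j = nat \<bar>int j - int K\<bar>"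

lemma G1_lhs:
  assumes K: "K \<ge> 1"
  shows "(\<Prod>i<2*K. XX ^ (2*K-1) + (-1) * (XX^2) ^ i)
       = XX ^ (2 * tri K + (2*K-1)*K) * (fps_const ((-1)^K) * po K ^ 2)"
proof -
  have "(\<Prod>i<2*K. XX ^ (2*K-1) + (-1) * (XX^2) ^ i)
      = (\<Prod>i<K. XX ^ (2*K-1) + (-1) * (XX^2) ^ i) * (\<Prod>i<K. XX ^ (2*K-1) + (-1) * (XX^2) ^ (K+i))"
    using prod_split_lt[of _ K K] by (simp add: mult_2)
  also have "(\<Prod>i<K. XX ^ (2*K-1) + (-1) * (XX^2) ^ i)
      = (\<Prod>i<K. (-1) * (XX ^ (2*i) * (1 - XX ^ (2 * (K - Suc i) + 1))))"
  proof (rule prod.cong)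
    fix i assume "i \<in> {..<K}"
    then have "2*i + (2 * (K - Suc i) + 1) = 2*K-1" by auto
    then have eq: "XX ^ (2*i) * XX ^ (2 * (K - Suc i) + 1) = XX ^ (2*K-1)" by (metis power_add)
    have p: "(XX^2)^i = XX^(2*i)" by (simp add: power_mult)
    show "XX ^ (2*K-1) + (-1) * (XX^2) ^ i = (-1) * (XX ^ (2*i) * (1 - XX ^ (2 * (K - Suc i) + 1)))"
      unfolding p eq[symmetric] by (simp add: algebra_simps)
  qed simp
  also have "\<dots> = (-1)^K * XX ^ (2 * tri K) * po K"
  proof -
    have r: "(\<Prod>i<K. 1 - XX ^ (2 * (K - Suc i) + 1)) = po K" unfolding po_def
      by (rule prod.nat_diff_reindex[where g="\<lambda>t. 1 - XX ^ (2 * t + 1)"])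
    have x: "(\<Prod>i<K. XX ^ (2*i)) = XX ^ (2 * tri K)"
      by (simp add: tri_sum power_sum sum_distrib_left)
    show ?thesis unfolding prod.distrib r x by simp
  qed
  also have "(\<Prod>i<K. XX ^ (2*K-1) + (-1) * (XX^2) ^ (K+i)) = (\<Prod>i<K. XX ^ (2*K-1) * (1 - XX ^ (2*i+1)))"
  proof (rule prod.cong)
    fix i assume "i \<in> {..<K}"
    have "2*K-1 + (2*i+1) = 2*(K+i)" using K by simp
    then have eq: "XX ^ (2*K-1) * XX ^ (2*i+1) = (XX^2) ^ (K+i)" by (metis power_add power_mult)
    show "XX ^ (2*K-1) + (-1) * (XX^2) ^ (K+i) = XX ^ (2*K-1) * (1 - XX ^ (2*i+1))"
      unfolding eq[symmetric] by (simp add: algebra_simps)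
  qed simp
  also have "\<dots> = XX ^ ((2*K-1)*K) * po K"
    unfolding prod.distrib po_def power_mult by simp
  finally show ?thesis
    by (simp add: const_pow[symmetric] power_add power2_eq_square ac_simps)
qed

lemma G1_exp:
  assumes K: "K \<ge> 1" and j: "j \<le> 2*K"
  shows "2 * tri j + (2*K-1)*(2*K-j) = 2 * tri K + (2*K-1)*K + dd K j * dd K j"
proof -
  have d: "int (dd K j * dd K j) = (int j - int K) * (int j - int K)"
    unfolding dd_def by (simp add: abs_mult_self_eq)
  have a: "int (2*K-1) = 2 * int K - 1" using K by simp
  have b: "int (2*K-j) = 2 * int K - int j" using j by simp
  have "int (2 * tri j + (2*K-1)*(2*K-j)) = int (2 * tri K + (2*K-1)*K + dd K j * dd K j)"
    unfolding of_nat_add of_nat_mult[of "2*K-1"] tri_int a b d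
    by (simp only: of_nat_mult[symmetric] tri_int) (simp add: algebra_simps)
  then show ?thesis by (simp only: of_nat_eq_iff)
qed

lemma G1_fin:
  assumes K: "K \<ge> 1"
  shows "fps_const ((-1)^K) * po K ^ 2
       = (\<Sum>j\<le>2*K. fps_const ((-1)^j) * gb (XX^2) (2*K) j * XX ^ (dd K j * dd K j))"
proof (rule Xpow_cancel[where c = "2 * tri K + (2*K-1)*K"])
  have "XX ^ (2 * tri K + (2*K-1)*K) * (fps_const ((-1)^K) * po K ^ 2)
      = (\<Sum>j\<le>2*K. gb (XX^2) (2*K) j * (XX^2) ^ tri j * (-1) ^ j * (XX ^ (2*K-1)) ^ (2*K - j))"
    unfolding G1_lhs[OF K, symmetric] by (rule qbin)
  also have "\<dots> = XX ^ (2 * tri K + (2*K-1)*K) *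
      (\<Sum>j\<le>2*K. fps_const ((-1)^j) * gb (XX^2) (2*K) j * XX ^ (dd K j * dd K j))"
    unfolding sum_distrib_left
  proof (rule sum.cong)
    fix j assume "j \<in> {..2*K}"
    then have e: "2 * tri j + (2*K-1)*(2*K-j) = 2 * tri K + (2*K-1)*K + dd K j * dd K j"
      using G1_exp[OF K] by auto
    have "(XX^2) ^ tri j * (XX ^ (2*K-1)) ^ (2*K - j) = XX ^ (2 * tri K + (2*K-1)*K) * XX ^ (dd K j * dd K j)"
      unfolding power_mult[symmetric] power_add[symmetric] e ..
    then show "gb (XX^2) (2*K) j * (XX^2) ^ tri j * (-1) ^ j * (XX ^ (2*K-1)) ^ (2*K - j)
      = XX ^ (2 * tri K + (2*K-1)*K) * (fps_const ((-1)^j) * gb (XX^2) (2*K) j * XX ^ (dd K j * dd K j))"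
      by (simp add: const_pow ac_simps)
  qed simp
  finally show "XX ^ (2 * tri K + (2*K-1)*K) * (fps_const ((-1)^K) * po K ^ 2)
      = XX ^ (2 * tri K + (2*K-1)*K) * (\<Sum>j\<le>2*K. fps_const ((-1)^j) * gb (XX^2) (2*K) j * XX ^ (dd K j * dd K j))" .
qed


lemma pair1: "(\<Sum>j\<le>2*K. g j) = g K + (\<Sum>k<K. g (K - Suc k) + g (K + Suc k))"
proof -
  have "{..2*K} = {..<K + Suc K}" by auto
  then have "(\<Sum>j\<le>2*K. g j) = (\<Sum>j<K. g j) + (\<Sum>i<Suc K. g (K + i))"
    by (simp only: sum_split_lt)
  also have "(\<Sum>i<Suc K. g (K + i)) = g K + (\<Sum>i<K. g (K + Suc i))"
    by (simp only: sum.lessThan_Suc_shift) simp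
  also have "(\<Sum>j<K. g j) = (\<Sum>k<K. g (K - Suc k))"
    by (rule sum.nat_diff_reindex[symmetric])
  finally show ?thesis by (simp add: sum.distrib ac_simps)
qed

lemma sgn_pair1: "a \<le> K \<Longrightarrow> (-1::int)^K * (-1)^(K - a) = (-1)^a"
proof -
  assume "a \<le> K"
  then have e: "K + (K - a) = 2 * (K - a) + a" by simp
  have "(-1::int)^K * (-1)^(K - a) = (-1)^(2 * (K - a) + a)" by (simp only: power_add[symmetric] e)
  also have "\<dots> = (-1)^a" by (simp add: power_add power_mult)
  finally show ?thesis .
qed

lemma sgn_pair2: "(-1::int)^K * (-1)^(K + a) = (-1)^a"
proof -
  have e: "K + (K + a) = 2 * K + a" by simp
  have "(-1::int)^K * (-1)^(K + a) = (-1)^(2 * K + a)" by (simp only: power_add[symmetric] e)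
  also have "\<dots> = (-1)^a" by (simp add: power_add power_mult)
  finally show ?thesis .
qed

lemma fc_double: "fps_const c * A + fps_const c * A = fps_const (2 * c) * (A :: int fps)"
  by (simp only: mult_2 fps_const_add[symmetric] distrib_right)

lemma T1_pair:
  "fps_const ((-1)^K) * (\<Sum>j\<le>2*K. fps_const ((-1)^j) * XX ^ (dd K j * dd K j)) = psf pc sqe (Suc K)"
proof -
  have d1: "dd K (K - Suc k) = Suc k" if "k < K" for k using that by (simp add: dd_def of_nat_diff)
  have d2: "dd K (K + Suc k) = Suc k" for k by (simp add: dd_def)
  have d0: "dd K K = 0" by (simp add: dd_def)
  have "fps_const ((-1)^K) * (\<Sum>j\<le>2*K. fps_const ((-1)^j) * XX ^ (dd K j * dd K j))
      = (\<Sum>j\<le>2*K. fps_const ((-1)^K * (-1)^j) * XX ^ (dd K j * dd K j))"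
    by (simp add: sum_distrib_left mult.assoc[symmetric])
  also have "\<dots> = 1 + (\<Sum>k<K. fps_const (pc (Suc k)) * XX ^ (sqe (Suc k)))"
    unfolding pair1
  proof (intro arg_cong2[where f="(+)"] sum.cong)
    have "(-1::int)^K * (-1)^K = 1" by (simp flip: power_add)
    then show "fps_const ((-1)^K * (-1)^K) * XX ^ (dd K K * dd K K) = 1"
      by (simp add: d0)
  next
    fix k assume k: "k \<in> {..<K}"
    then have "Suc k \<le> K" by simp
    then have "fps_const ((-1)^K * (-1)^(K - Suc k)) * XX ^ (dd K (K - Suc k) * dd K (K - Suc k)) +
        fps_const ((-1)^K * (-1)^(K + Suc k)) * XX ^ (dd K (K + Suc k) * dd K (K + Suc k))
        = fps_const ((-1)^Suc k) * XX ^ (Suc k * Suc k) + fps_const ((-1)^Suc k) * XX ^ (Suc k * Suc k)"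
      using k by (simp only: sgn_pair1 sgn_pair2 d1 d2 lessThan_iff)
    also have "\<dots> = fps_const (pc (Suc k)) * XX ^ (sqe (Suc k))"
      unfolding fc_double by (simp only: pc_def sqe_def) simp
    finally show "fps_const ((-1)^K * (-1)^(K - Suc k)) * XX ^ (dd K (K - Suc k) * dd K (K - Suc k)) +
        fps_const ((-1)^K * (-1)^(K + Suc k)) * XX ^ (dd K (K + Suc k) * dd K (K + Suc k))
        = fps_const (pc (Suc k)) * XX ^ (sqe (Suc k))" .
  qed simp
  also have "\<dots> = psf pc sqe (Suc K)"
    unfolding psf_def by (simp only: sum.lessThan_Suc_shift) (simp add: pc_def sqe_def)
  finally show ?thesis .
qed

lemma dd_small:
  assumes "dd K j * dd K j < L"
  shows "int K - int L < int j \<and> int j < int K + int L"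
proof -
  have "dd K j \<le> dd K j * dd K j" by (cases "dd K j") auto
  then have "dd K j < L" using assms by linarith
  then show ?thesis unfolding dd_def by linarith
qed

lemma G1: "Pm * eta_f 2 = eta_f 1 ^ 2"
proof (rule eqt_all)
  fix L :: nat
  define K where "K = 2*L+1"
  have K1: "K \<ge> 1" by (simp add: K_def)
  define E2 where "E2 = eta_f 2"
  define T where "T = (\<Sum>j\<le>2*K. fps_const ((-1)^j) * XX ^ (dd K j * dd K j))"
  have "eqt L ((\<Sum>j\<le>2*K. fps_const ((-1)^j) * gb (XX^2) (2*K) j * XX ^ (dd K j * dd K j)) * eta_f 2) T"
    unfolding T_def
  proof (rule sum_gb_lim)
    fix j assume "j \<in> {..2*K}" "dd K j * dd K j < L"
    with dd_small[of K j L] show "L \<le> j \<and> L \<le> 2 * K - j \<and> j \<le> 2 * K"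
      unfolding K_def by auto
  qed simp
  then have h1: "eqt L (fps_const ((-1)^K) * po K ^ 2 * E2) T"
    unfolding G1_fin[OF K1, symmetric] E2_def .
  have "eqt L (fps_const ((-1)^K) * (fps_const ((-1)^K) * po K ^ 2 * E2)) (fps_const ((-1)^K) * T)"
    by (rule eqt_mult[OF eqt_refl h1])
  moreover have "fps_const ((-1)^K) * (fps_const ((-1)^K) * po K ^ 2 * E2) = po K ^ 2 * E2"
  proof -
    have "(-1::int)^K * (-1)^K = 1" by (simp flip: power_add)
    then have "fps_const ((-1::int)^K) * fps_const ((-1)^K) = 1"
      by (simp only: fps_const_mult) simp
    then show ?thesis by (simp add: mult.assoc[symmetric])
  qed
  ultimately have h2: "eqt L (po K ^ 2 * E2) (psf pc sqe (Suc K))"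
    unfolding T_def T1_pair by simp
  have "L \<le> Suc K" by (simp add: K_def)
  from eqt_trans[OF Pm_eqt[OF this] eqt_sym[OF h2]] have h3: "eqt L Pm (po K ^ 2 * E2)" .
  have e2: "eqt L E2 (pp 2 K)" unfolding E2_def by (rule eta_pp) (auto simp: K_def)
  have e1: "eqt L (eta_f 1) (pp 1 (2*K))" by (rule eta_pp) (auto simp: K_def)
  have "eqt L (Pm * E2) (po K ^ 2 * pp 2 K * pp 2 K)"
    using eqt_mult[OF h3 e2] eqt_mult[OF eqt_mult[OF eqt_refl e2] eqt_refl, of "po K ^ 2" "pp 2 K"]
    by (rule eqt_trans)
  moreover have "po K ^ 2 * pp 2 K * pp 2 K = pp 1 (2*K) ^ 2"
    unfolding po_pp[symmetric] by (simp add: power2_eq_square ac_simps)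
  moreover have "eqt L (pp 1 (2*K) ^ 2) (eta_f 1 ^ 2)" by (rule eqt_power[OF eqt_sym[OF e1]])
  ultimately show "eqt L (Pm * eta_f 2) (eta_f 1 ^ 2)" unfolding E2_def
    using eqt_trans by simp
qed



definition pq :: "nat \<Rightarrow> int fps" where "pq K = (\<Prod>i<K. 1 + XX ^ Suc i)"

lemma pq_pp: "pq K * pp 1 K = pp 2 K"
proof (induction K)
  case 0 then show ?case by (simp add: pq_def)
next
  case (Suc K)
  have x: "XX ^ (2 * Suc K) = XX ^ Suc K * XX ^ Suc K" by (simp flip: power_add)
  have "pq (Suc K) * pp 1 (Suc K) = (pq K * pp 1 K) * ((1 + XX ^ Suc K) * (1 - XX ^ Suc K))"
    by (simp add: pq_def pp_Suc ac_simps)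
  also have "\<dots> = pp 2 (Suc K)" unfolding Suc pp_Suc x by (simp add: algebra_simps)
  finally show ?case .
qed

definition ex2 :: "nat \<Rightarrow> nat \<Rightarrow> nat" where
  "ex2 K j = (if K \<le> j then tri (j - K) else tri (K - j + 1))"

lemma G2_lhs:
  "(\<Prod>i<2*K+1. XX ^ K + 1 * (XX^1) ^ i) = XX ^ (tri K + K + K*K) * (fps_const 2 * pq K ^ 2)"
proof -
  have e: "{..<2*K+1} = {..<K + Suc K}" by simp
  have "(\<Prod>i<2*K+1. XX ^ K + 1 * (XX^1) ^ i) = (\<Prod>i<K. XX ^ K + XX ^ i) * (\<Prod>i<Suc K. XX ^ K + XX ^ (K+i))"
    unfolding e prod_split_lt by (simp only: power_one_right mult_1_left)
  also have "(\<Prod>i<Suc K. XX ^ K + XX ^ (K+i)) = (XX ^ K + XX ^ K) * (\<Prod>i<K. XX ^ K + XX ^ (K + Suc i))"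
    by (simp only: prod.lessThan_Suc_shift) simp
  also have "(\<Prod>i<K. XX ^ K + XX ^ (K + Suc i)) = (\<Prod>i<K. XX ^ K * (1 + XX ^ Suc i))"
    by (rule prod.cong) (simp_all add: algebra_simps power_add)
  also have "\<dots> = XX ^ (K*K) * pq K"
    unfolding prod.distrib pq_def power_mult by simp
  also have "(\<Prod>i<K. XX ^ K + XX ^ i) = (\<Prod>i<K. XX ^ i * (1 + XX ^ Suc (K - Suc i)))"
  proof (rule prod.cong)
    fix i assume "i \<in> {..<K}"
    then have "i + Suc (K - Suc i) = K" by auto
    then have eq: "XX ^ i * XX ^ Suc (K - Suc i) = XX ^ K" by (metis power_add)
    show "XX ^ K + XX ^ i = XX ^ i * (1 + XX ^ Suc (K - Suc i))"
      unfolding eq[symmetric] by (simp add: algebra_simps)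
  qed simp
  also have "\<dots> = XX ^ tri K * pq K"
  proof -
    have r: "(\<Prod>i<K. 1 + XX ^ Suc (K - Suc i)) = pq K" unfolding pq_def
      by (rule prod.nat_diff_reindex[where g="\<lambda>t. 1 + XX ^ Suc t"])
    have x: "(\<Prod>i<K. XX ^ i) = XX ^ tri K"
      by (simp add: tri_sum power_sum)
    show ?thesis unfolding prod.distrib r x ..
  qed
  also have "XX ^ K + XX ^ K = fps_const 2 * (XX ^ K :: int fps)"
    using fc_double[of 1 "XX ^ K"] by simp
  finally show ?thesis by (simp only: power_add power2_eq_square mult_ac)
qed

lemma tri_int2: "2 * int (tri n) = int n * int n - int n"
  using tri_int[of n] by simp

lemma G2_exp:
  assumes j: "j \<le> 2*K+1"
  shows "tri j + K*(2*K+1-j) = tri K + K + K*K + ex2 K j"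
proof -
  have b: "int (2*K+1-j) = 2 * int K + 1 - int j" using j by simp
  have L1: "2 * int (tri j + K*(2*K+1-j)) = 2 * int (tri j) + 2 * int K * (2 * int K + 1 - int j)"
    by (simp only: of_nat_add of_nat_mult b) (simp add: algebra_simps)
  have L2: "2 * int (tri K + K + K*K + ex2 K j) = 2 * int (tri K) + 2 * int K + 2 * int K * int K + 2 * int (ex2 K j)"
    by (simp only: of_nat_add of_nat_mult) (simp add: algebra_simps)
  have "2 * int (tri j + K*(2*K+1-j)) = 2 * int (tri K + K + K*K + ex2 K j)"
  proof (cases "K \<le> j")
    case True
    have c: "int (j - K) = int j - int K" using True by simp
    have ex: "2 * int (ex2 K j) = (int j - int K) * (int j - int K) - (int j - int K)"
      using True unfolding ex2_def by (simp only: if_True tri_int2 c)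
    show ?thesis unfolding L1 L2 tri_int2 ex by (simp add: algebra_simps)
  next
    case False
    have c: "int (K - j + 1) = int K - int j + 1" using False by simp
    have ex: "2 * int (ex2 K j) = (int K - int j + 1) * (int K - int j + 1) - (int K - int j + 1)"
      using False unfolding ex2_def by (simp only: if_False tri_int2 c)
    show ?thesis unfolding L1 L2 tri_int2 ex by (simp add: algebra_simps)
  qed
  then have "int (tri j + K*(2*K+1-j)) = int (tri K + K + K*K + ex2 K j)"
    by (subst (asm) mult_cancel_left) simp
  then show ?thesis by (simp only: of_nat_eq_iff)
qed

lemma G2_fin:
  "fps_const 2 * pq K ^ 2 = (\<Sum>j\<le>2*K+1. fps_const 1 * gb (XX^1) (2*K+1) j * XX ^ ex2 K j)"
proof (rule Xpow_cancel[where c = "tri K + K + K*K"])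
  have "XX ^ (tri K + K + K*K) * (fps_const 2 * pq K ^ 2)
      = (\<Sum>j\<le>2*K+1. gb (XX^1) (2*K+1) j * (XX^1) ^ tri j * 1 ^ j * (XX ^ K) ^ (2*K+1 - j))"
    unfolding G2_lhs[symmetric] by (rule qbin)
  also have "\<dots> = XX ^ (tri K + K + K*K) *
      (\<Sum>j\<le>2*K+1. fps_const 1 * gb (XX^1) (2*K+1) j * XX ^ ex2 K j)"
    unfolding sum_distrib_left
  proof (rule sum.cong)
    fix j assume "j \<in> {..2*K+1}"
    then have e: "tri j + K*(2*K+1-j) = tri K + K + K*K + ex2 K j"
      using G2_exp by auto
    have "(XX^1) ^ tri j * (XX ^ K) ^ (2*K+1 - j) = XX ^ (tri K + K + K*K) * XX ^ ex2 K j"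
      unfolding power_one_right power_mult[symmetric] power_add[symmetric] e ..
    then show "gb (XX^1) (2*K+1) j * (XX^1) ^ tri j * 1 ^ j * (XX ^ K) ^ (2*K+1 - j)
      = XX ^ (tri K + K + K*K) * (fps_const 1 * gb (XX^1) (2*K+1) j * XX ^ ex2 K j)"
      by (simp add: ac_simps)
  qed simp
  finally show "XX ^ (tri K + K + K*K) * (fps_const 2 * pq K ^ 2)
      = XX ^ (tri K + K + K*K) * (\<Sum>j\<le>2*K+1. fps_const 1 * gb (XX^1) (2*K+1) j * XX ^ ex2 K j)" .
qed

lemma pair2: "(\<Sum>j\<le>2*K+1. g j) = (\<Sum>i<Suc K. g (K - i) + g (K + Suc i))"
proof -
  have "{..2*K+1} = {..<Suc K + Suc K}" by auto
  then have "(\<Sum>j\<le>2*K+1. g j) = (\<Sum>j<Suc K. g j) + (\<Sum>i<Suc K. g (Suc K + i))"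
    by (simp only: sum_split_lt)
  also have "(\<Sum>j<Suc K. g j) = (\<Sum>i<Suc K. g (Suc K - Suc i))"
    by (rule sum.nat_diff_reindex[symmetric])
  finally show ?thesis by (simp add: sum.distrib)
qed

lemma T2_pair: "(\<Sum>j\<le>2*K+1. fps_const 1 * XX ^ ex2 K j) = psf (\<lambda>_. 2) tre (Suc K)"
  unfolding pair2 psf_def
proof (rule sum.cong)
  fix i assume "i \<in> {..<Suc K}"
  then have i: "i \<le> K" by simp
  have e1: "ex2 K (K - i) = tri (Suc i)"
    using i by (cases i) (auto simp: ex2_def)
  have e2: "ex2 K (K + Suc i) = tri (Suc i)" by (simp add: ex2_def)
  show "fps_const 1 * XX ^ ex2 K (K - i) + fps_const 1 * XX ^ ex2 K (K + Suc i)
      = fps_const 2 * XX ^ tre i"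
    unfolding e1 e2 tre_def fc_double by (simp only: mult_1_right)
qed simp

lemma tri_ge': "n \<le> tri n + 1"
  by (cases n) (auto simp: tri_ge intro: le_trans)

lemma G2: "Ps * eta_f 1 = fps_const 2 * eta_f 2 ^ 2"
proof (rule eqt_all)
  fix L :: nat
  define K where "K = 2*L+1"
  define E1 where "E1 = eta_f 1"
  have "eqt L ((\<Sum>j\<le>2*K+1. fps_const 1 * gb (XX^1) (2*K+1) j * XX ^ ex2 K j) * eta_f 1)
                (\<Sum>j\<le>2*K+1. fps_const 1 * XX ^ ex2 K j)"
  proof (rule sum_gb_lim)
    fix j assume j: "j \<in> {..2*K+1}" "ex2 K j < L"
    show "L \<le> j \<and> L \<le> 2 * K + 1 - j \<and> j \<le> 2 * K + 1"
    proof (cases "K \<le> j")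
      case True
      with j have "tri (j - K) < L" by (simp add: ex2_def)
      with tri_ge'[of "j - K"] have "j - K \<le> L" by linarith
      with True j show ?thesis unfolding K_def by auto
    next
      case False
      with j have "tri (K - j + 1) < L" by (simp add: ex2_def)
      with tri_ge[of "K - j"] have "K - j < L" by simp
      with False j show ?thesis unfolding K_def by auto
    qed
  qed simp
  then have h1: "eqt L (fps_const 2 * pq K ^ 2 * E1) (psf (\<lambda>_. 2) tre (Suc K))"
    unfolding G2_fin[symmetric] T2_pair E1_def .
  have "L \<le> Suc K" by (simp add: K_def)
  from eqt_trans[OF Ps_eqt[OF this] eqt_sym[OF h1]] have h3: "eqt L Ps (fps_const 2 * pq K ^ 2 * E1)" .
  have e1: "eqt L E1 (pp 1 K)" unfolding E1_def by (rule eta_pp) (auto simp: K_def)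
  have e2: "eqt L (eta_f 2) (pp 2 K)" by (rule eta_pp) (auto simp: K_def)
  have "eqt L (Ps * E1) (fps_const 2 * pq K ^ 2 * pp 1 K * pp 1 K)"
    using eqt_mult[OF h3 e1] eqt_mult[OF eqt_mult[OF eqt_refl e1] eqt_refl, of "fps_const 2 * pq K ^ 2" "pp 1 K"]
    by (rule eqt_trans)
  moreover have "fps_const 2 * pq K ^ 2 * pp 1 K * pp 1 K = fps_const 2 * pp 2 K ^ 2"
    unfolding pq_pp[symmetric] by (simp add: power2_eq_square ac_simps)
  ultimately have "eqt L (Ps * E1) (fps_const 2 * pp 2 K ^ 2)" by (simp only:)
  moreover have "eqt L (fps_const 2 * pp 2 K ^ 2) (fps_const 2 * eta_f 2 ^ 2)"
    by (rule eqt_mult[OF eqt_refl eqt_power[OF eqt_sym[OF e2]]])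
  ultimately show "eqt L (Ps * eta_f 1) (fps_const 2 * eta_f 2 ^ 2)" unfolding E1_def
    by (rule eqt_trans)
qed



lemma c2: "fps_const (2::int) = 2" by (simp only: numeral_fps_const)

lemma sg_f2: "sg (eta_f 2) = eta_f 2"
  using sg_dil2[of "eta_f 1"] dil_eta[of 2 1] by simp
lemma sg_f4: "sg (eta_f 4) = eta_f 4"
  using sg_dil2[of "eta_f 2"] dil_eta[of 2 2] by simp
lemma sg_dil4: "sg (dil 4 A) = dil 4 A"
  using sg_dil2[of "dil 2 A"] dil_dil[of 2 2 A] by simp
lemma sg_dil8: "sg (dil 8 A) = dil 8 A"
  using sg_dil2[of "dil 4 A"] dil_dil[of 2 4 A] by simp

lemma cancel: "(c::int fps) \<noteq> 0 \<Longrightarrow> c * u = c * v \<Longrightarrow> u = v" by simp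

lemma fnz: "r > 0 \<Longrightarrow> eta_f r \<noteq> 0" by (rule eta_nz)

lemma L1: "Ph * eta_f 2 = sg (eta_f 1) ^ 2"
  using arg_cong[OF G1, of sg] by (simp add: sg_mult sg_power sg_Pm sg_f2)

lemma L2: "Ph * eta_f 1 ^ 2 * eta_f 4 ^ 2 = eta_f 2 ^ 5"
proof (rule cancel[of "eta_f 2"])
  show "eta_f 2 \<noteq> 0" by (simp add: fnz)
  have "eta_f 2 * (Ph * eta_f 1 ^ 2 * eta_f 4 ^ 2) = (Ph * eta_f 2) * (eta_f 1 * eta_f 4) ^ 2"
    by (simp add: power2_eq_square ac_simps)
  also have "\<dots> = (sg (eta_f 1) * eta_f 1 * eta_f 4) ^ 2" unfolding L1 by (simp add: power2_eq_square ac_simps)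
  also have "\<dots> = eta_f 2 * eta_f 2 ^ 5" unfolding sg_eta1 by (simp flip: power_mult power_Suc)
  finally show "eta_f 2 * (Ph * eta_f 1 ^ 2 * eta_f 4 ^ 2) = eta_f 2 * eta_f 2 ^ 5" .
qed

lemma dil_num2: "k > 0 \<Longrightarrow> dil k 2 = 2"
  using dil_const[of k 2] by (simp add: c2)

lemma dG1: "dil 2 Pm * eta_f 4 = eta_f 2 ^ 2"
  using arg_cong[OF G1, of "dil 2"] by (simp add: dil_mult dil_power dil_eta)

lemma dG2: "dil 2 Ps * eta_f 2 = 2 * eta_f 4 ^ 2"
  using arg_cong[OF G2, of "dil 2"] by (simp add: dil_mult dil_power dil_eta dil_const dil_num2 c2)

lemma G2': "Ps * eta_f 1 = 2 * eta_f 2 ^ 2" using G2 by (simp add: c2)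

lemma L3: "Pm * Ph = (dil 2 Pm) ^ 2"
proof (rule cancel[of "eta_f 4 ^ 2 * eta_f 2 * eta_f 1 ^ 2"])
  show "eta_f 4 ^ 2 * eta_f 2 * eta_f 1 ^ 2 \<noteq> 0" by (simp add: fnz)
  have "eta_f 4 ^ 2 * eta_f 2 * eta_f 1 ^ 2 * (Pm * Ph) = (Pm * eta_f 2) * (Ph * eta_f 1 ^ 2 * eta_f 4 ^ 2)"
    by (simp add: ac_simps)
  also have "\<dots> = eta_f 1 ^ 2 * eta_f 2 ^ 5" unfolding G1 L2 ..
  also have "\<dots> = eta_f 2 * eta_f 1 ^ 2 * (dil 2 Pm * eta_f 4) ^ 2"
    unfolding dG1 by algebra
  also have "\<dots> = eta_f 4 ^ 2 * eta_f 2 * eta_f 1 ^ 2 * (dil 2 Pm) ^ 2"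
    by (simp add: power_mult_distrib ac_simps)
  finally show "eta_f 4 ^ 2 * eta_f 2 * eta_f 1 ^ 2 * (Pm * Ph) = eta_f 4 ^ 2 * eta_f 2 * eta_f 1 ^ 2 * (dil 2 Pm) ^ 2" .
qed

lemma L4: "2 * Ph * dil 2 Ps = Ps ^ 2"
proof (rule cancel[of "eta_f 1 ^ 2 * eta_f 4 ^ 2 * eta_f 2"])
  show "eta_f 1 ^ 2 * eta_f 4 ^ 2 * eta_f 2 \<noteq> 0" by (simp add: fnz)
  have "eta_f 1 ^ 2 * eta_f 4 ^ 2 * eta_f 2 * (2 * Ph * dil 2 Ps) = 2 * (Ph * eta_f 1 ^ 2 * eta_f 4 ^ 2) * (dil 2 Ps * eta_f 2)"
    by (simp add: ac_simps)
  also have "\<dots> = 2 * eta_f 2 ^ 5 * (2 * eta_f 4 ^ 2)" unfolding L2 dG2 ..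
  also have "\<dots> = eta_f 4 ^ 2 * eta_f 2 * (2 * eta_f 2 ^ 2) ^ 2"
    by algebra
  also have "\<dots> = eta_f 1 ^ 2 * eta_f 4 ^ 2 * eta_f 2 * Ps ^ 2"
    unfolding G2'[symmetric] by (simp add: power_mult_distrib ac_simps)
  finally show "eta_f 1 ^ 2 * eta_f 4 ^ 2 * eta_f 2 * (2 * Ph * dil 2 Ps) = eta_f 1 ^ 2 * eta_f 4 ^ 2 * eta_f 2 * Ps ^ 2" .
qed

lemma L5: "Ph = dil 4 Ph + XX * dil 8 Ps"
proof -
  have "sg Pm = sg (dil 4 Ph) - sg XX * sg (dil 8 Ps)" using arg_cong[OF a_ident, of sg]
    by (simp add: sg_diff sg_mult)
  then show ?thesis by (simp add: sg_Pm sg_dil4 sg_dil8 sg_X)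
qed

lemma dL4: "2 * dil 4 Ph * dil 8 Ps = (dil 4 Ps) ^ 2"
  using arg_cong[OF L4, of "dil 4"] by (simp add: dil_mult dil_power dil_dil dil_num2)

lemma L6: "Ph ^ 2 - Pm ^ 2 = 2 * XX * (dil 4 Ps) ^ 2"
proof -
  have a: "Pm = dil 4 Ph - XX * dil 8 Ps" by (rule a_ident)
  have b: "Ph = dil 4 Ph + XX * dil 8 Ps" by (rule L5)
  show ?thesis using a b dL4 by algebra
qed

lemma L7: "(dil 2 Ph) ^ 2 - (dil 2 Pm) ^ 2 = 2 * XX ^ 2 * (dil 8 Ps) ^ 2"
  using arg_cong[OF L6, of "dil 2"] by (simp add: dil_mult dil_power dil_dil dil_num2 dil_diff dil_X)

lemma L9: "2 * dil 2 Ph * dil 4 Ps = (dil 2 Ps) ^ 2"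
  using arg_cong[OF L4, of "dil 2"] by (simp add: dil_mult dil_power dil_dil dil_num2)

lemma L10: "Ph ^ 4 - Pm ^ 4 = XX * (dil 2 Ps) ^ 4"
proof -
  have a: "Pm = dil 4 Ph - XX * dil 8 Ps" by (rule a_ident)
  have b: "Ph = dil 4 Ph + XX * dil 8 Ps" by (rule L5)
  have L8: "Ph ^ 2 + Pm ^ 2 = 2 * (dil 2 Ph) ^ 2" using a b L3 L7 by algebra
  show ?thesis using L6 L8 L9 by algebra
qed

lemma L11: "sg (eta_f 1 ^ 8) - eta_f 1 ^ 8 = 16 * XX * eta_f 4 ^ 8"
proof -
  have "sg (eta_f 1 ^ 8) = (Ph * eta_f 2) ^ 4" unfolding L1 sg_power by (simp flip: power_mult)
  moreover have "eta_f 1 ^ 8 = (Pm * eta_f 2) ^ 4" unfolding G1 by (simp flip: power_mult)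
  ultimately have "sg (eta_f 1 ^ 8) - eta_f 1 ^ 8 = eta_f 2 ^ 4 * (Ph ^ 4 - Pm ^ 4)"
    by (simp add: power_mult_distrib algebra_simps)
  also have "\<dots> = XX * (dil 2 Ps * eta_f 2) ^ 4" unfolding L10 by (simp add: power_mult_distrib ac_simps)
  also have "\<dots> = 16 * XX * eta_f 4 ^ 8" unfolding dG2 by (simp add: power_mult_distrib flip: power_mult)
  finally show ?thesis .
qed



lemma F_rec: "(eta_f 1 ^ 8) $ (4*n+1) = -8 * (eta_f 1 ^ 8) $ n"
proof -
  define F where "F = eta_f 1 ^ 8"
  have f48: "eta_f 4 ^ 8 = dil 4 F" unfolding F_def by (simp add: dil_power dil_eta)
  have "(sg F - F) $ (4*n+1) = (16 * XX * eta_f 4 ^ 8) $ (4*n+1)" unfolding F_def L11 ..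
  moreover have "(sg F - F) $ (4*n+1) = -2 * F $ (4*n+1)" by (simp add: sg_nth)
  moreover have "(16 * XX * eta_f 4 ^ 8) $ (4*n+1) = 16 * F $ n"
  proof -
    have "(16 * XX * eta_f 4 ^ 8) $ (4*n+1) = 16 * (XX * dil 4 F) $ (4*n+1)"
      unfolding f48 numeral_fps_const by (simp add: mult.assoc)
    also have "\<dots> = 16 * F $ n" by (simp add: dil_nth)
    finally show ?thesis .
  qed
  ultimately show ?thesis unfolding F_def by simp
qed

definition md5 :: "int fps \<Rightarrow> int fps \<Rightarrow> bool" where
  "md5 A B \<longleftrightarrow> (\<exists>C. A - B = fps_const 5 * C)"

lemma md5_refl: "md5 A A" unfolding md5_def by (rule exI[of _ 0]) simp
lemma md5_sym: assumes "md5 A B" shows "md5 B A"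
proof -
  from assms obtain U where U: "A - B = fps_const 5 * U" unfolding md5_def by blast
  have "B - A = fps_const 5 * (- U)" using U by (simp add: algebra_simps)
  then show ?thesis unfolding md5_def by blast
qed
lemma md5_trans: assumes "md5 A B" "md5 B C" shows "md5 A C"
proof -
  from assms obtain U V where U: "A - B = fps_const 5 * U" and V: "B - C = fps_const 5 * V"
    unfolding md5_def by blast
  have "A - C = (A - B) + (B - C)" by simp
  also have "\<dots> = fps_const 5 * (U + V)" unfolding U V by (simp add: algebra_simps)
  finally show ?thesis unfolding md5_def by blast
qed
lemma md5_mult: assumes "md5 A B" "md5 C D" shows "md5 (A * C) (B * D)"
proof -
  from assms obtain U V where U: "A - B = fps_const 5 * U" and V: "C - D = fps_const 5 * V"
    unfolding md5_def by blast
  have "A * C - B * D = (A - B) * C + B * (C - D)" by (simp add: algebra_simps)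
  also have "\<dots> = fps_const 5 * (U * C + B * V)" unfolding U V by (simp add: algebra_simps)
  finally show ?thesis unfolding md5_def by blast
qed
lemma md5_power: "md5 A B \<Longrightarrow> md5 (A ^ k) (B ^ k)"
  by (induction k) (auto intro: md5_mult md5_refl)
lemma md5_nth: "md5 A B \<Longrightarrow> (5::int) dvd (A $ n - B $ n)"
  unfolding md5_def by (auto simp flip: fps_sub_nth)
lemma md5_of_nth: assumes "\<And>n. (5::int) dvd (A $ n - B $ n)" shows "md5 A B"
proof -
  define C where "C = Abs_fps (\<lambda>n. (A $ n - B $ n) div 5)"
  have "A - B = fps_const 5 * C"
    by (rule fps_ext) (use assms in \<open>simp add: C_def\<close>)
  then show ?thesis unfolding md5_def by blast
qed

lemma frob1: "md5 ((1 - y) ^ 5) (1 - y ^ 5)"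
proof -
  have "(1 - y) ^ 5 - (1 - y ^ 5) = fps_const 5 * (- y + 2 * y^2 - 2 * y^3 + y^4)"
    unfolding numeral_fps_const[symmetric] by algebra
  then show ?thesis unfolding md5_def by blast
qed

lemma frob_pp: "md5 (pp r M ^ 5) (pp (5*r) M)"
proof (induction M)
  case 0 then show ?case by (simp add: md5_refl)
next
  case (Suc M)
  have "md5 (pp r M ^ 5 * (1 - XX ^ (r * Suc M)) ^ 5) (pp (5*r) M * (1 - (XX ^ (r * Suc M)) ^ 5))"
    by (rule md5_mult[OF Suc.IH frob1])
  moreover have "(XX ^ (r * Suc M)) ^ 5 = XX ^ (5 * r * Suc M)"
  proof -
    have "r * Suc M * 5 = 5 * r * Suc M" by simp
    then show ?thesis by (metis power_mult)
  qed
  ultimately show ?case by (simp add: pp_Suc power_mult_distrib)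
qed

lemma frob_eta: assumes r: "r > 0" shows "md5 (eta_f r ^ 5) (eta_f (5*r))"
proof (rule md5_of_nth)
  fix n
  have e1: "eqt (Suc n) (eta_f r ^ 5) (pp r n ^ 5)" by (rule eqt_power[OF eta_pp]) (use r in auto)
  have e2: "eqt (Suc n) (eta_f (5*r)) (pp (5*r) n)" by (rule eta_pp) (use r in auto)
  from e1 e2 have "(eta_f r ^ 5) $ n - eta_f (5*r) $ n = (pp r n ^ 5) $ n - pp (5*r) n $ n"
    by (simp add: eqt_def)
  with md5_nth[OF frob_pp] show "5 dvd ((eta_f r ^ 5) $ n - eta_f (5*r) $ n)" by simp
qed

lemma B_md5:
  assumes l: "l > 0"
  shows "md5 (b_gen 2 l 5) (eta_f 1 ^ 8 * dil l (fps_right_inverse (eta_f 1 ^ 8) 1))"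
proof -
  define F where "F = eta_f 1 ^ 8"
  define W where "W = fps_right_inverse F 1"
  define R where "R = fps_right_inverse (eta_f 1 ^ 2 * eta_f (l * 5) ^ 2) 1"
  define V where "V = fps_right_inverse (eta_f 1 ^ 2 * eta_f l ^ 2) 1"
  define B where "B = b_gen 2 l 5"
  have c0: "(eta_f 1 ^ 2 * eta_f (l * 5) ^ 2) $ 0 = 1" using l by (simp add: eta_nth0 fps_nth_power_0)
  have hR: "eta_f 1 ^ 2 * eta_f (l * 5) ^ 2 * R = 1" unfolding R_def by (rule fps_right_inverse) (use l in \<open>simp add: eta_nth0 fps_nth_power_0\<close>)
  have hV: "eta_f 1 ^ 2 * eta_f l ^ 2 * V = 1" unfolding V_def by (rule fps_right_inverse) (use l in \<open>simp add: eta_nth0 fps_nth_power_0\<close>)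
  have hW: "F * W = 1" unfolding W_def by (rule fps_right_inverse) (simp add: F_def eta_nth0 fps_nth_power_0)
  have B: "B = eta_f l ^ 2 * eta_f 5 ^ 2 * R" unfolding B_def b_gen_def R_def ..
  have B1: "B * (eta_f 1 ^ 2 * eta_f (l * 5) ^ 2) = eta_f l ^ 2 * eta_f 5 ^ 2"
    unfolding B using hR by (simp add: ac_simps)
  have m1: "md5 (eta_f (l * 5) ^ 2) ((eta_f l ^ 5) ^ 2)"
    by (rule md5_power, rule md5_sym) (use frob_eta[OF l] in \<open>simp add: mult.commute\<close>)
  have m2: "md5 (eta_f 5 ^ 2) ((eta_f 1 ^ 5) ^ 2)"
    by (rule md5_power, rule md5_sym) (use frob_eta[of 1] in simp)
  have "md5 (B * (eta_f 1 ^ 2 * eta_f (l * 5) ^ 2)) (B * (eta_f 1 ^ 2 * (eta_f l ^ 5) ^ 2))"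
    by (rule md5_mult[OF md5_refl md5_mult[OF md5_refl m1]])
  moreover have "md5 (eta_f l ^ 2 * eta_f 5 ^ 2) (eta_f l ^ 2 * (eta_f 1 ^ 5) ^ 2)"
    by (rule md5_mult[OF md5_refl m2])
  ultimately have "md5 (B * (eta_f 1 ^ 2 * (eta_f l ^ 5) ^ 2)) (eta_f l ^ 2 * (eta_f 1 ^ 5) ^ 2)"
    unfolding B1 by (meson md5_sym md5_trans)
  then have "md5 (B * (eta_f 1 ^ 2 * (eta_f l ^ 5) ^ 2) * V) (eta_f l ^ 2 * (eta_f 1 ^ 5) ^ 2 * V)"
    by (rule md5_mult[OF _ md5_refl])
  moreover have "B * (eta_f 1 ^ 2 * (eta_f l ^ 5) ^ 2) * V = B * eta_f l ^ 8"
    using hV by algebra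
  moreover have "eta_f l ^ 2 * (eta_f 1 ^ 5) ^ 2 * V = F"
    unfolding F_def using hV by algebra
  ultimately have "md5 (B * eta_f l ^ 8) F" by (simp only:)
  then have "md5 (B * eta_f l ^ 8 * dil l W) (F * dil l W)" by (rule md5_mult[OF _ md5_refl])
  moreover have "eta_f l ^ 8 * dil l W = 1"
  proof -
    have "eta_f l ^ 8 = dil l F" unfolding F_def using l by (simp add: dil_power dil_eta)
    then have "eta_f l ^ 8 * dil l W = dil l (F * W)" using l by (simp add: dil_mult)
    then show ?thesis using hW l by (simp add: dil_one)
  qed
  ultimately show ?thesis unfolding B_def F_def W_def by (simp add: mult.assoc)
qed

lemma dil_coeff:
  "(eta_f 1 ^ 8 * dil 8 W) $ (4*n+1) = -8 * (eta_f 1 ^ 8 * dil 2 W) $ n"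
proof -
  define F where "F = eta_f 1 ^ 8"
  have d: "(4*n+1) div 8 = n div 2" by presburger
  have "(F * dil 8 W) $ (4*n+1) = (\<Sum>j=0..(4*n+1) div 8. F $ (4*n+1 - 8*j) * W $ j)"
    by (rule mult_dil_nth) simp
  also have "\<dots> = (\<Sum>j=0..n div 2. F $ (4*n+1 - 8*j) * W $ j)" unfolding d ..
  also have "\<dots> = (\<Sum>j=0..n div 2. -8 * (F $ (n - 2*j) * W $ j))"
  proof (rule sum.cong)
    fix j assume "j \<in> {0..n div 2}"
    then have e: "4*n+1 - 8*j = 4*(n - 2*j) + 1" by auto
    show "F $ (4*n+1 - 8*j) * W $ j = -8 * (F $ (n - 2*j) * W $ j)"
      unfolding F_def e F_rec by simp
  qed simp
  also have "\<dots> = -8 * (F * dil 2 W) $ n"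
    by (simp add: mult_dil_nth sum_distrib_left)
  finally show ?thesis unfolding F_def .
qed

lemma sq_odd: "even ((A * A) $ (2*k+1) :: int)"
proof -
  define g where "g i = A $ i * A $ (2*k+1 - i)" for i
  have "(A * A) $ (2*k+1) = (\<Sum>i<Suc k + Suc k. g i)"
    unfolding fps_mult_nth g_def by (rule sum.cong) auto
  also have "\<dots> = (\<Sum>i<Suc k. g i) + (\<Sum>i<Suc k. g (Suc k + i))" by (rule sum_split_lt)
  also have "(\<Sum>i<Suc k. g (Suc k + i)) = (\<Sum>i<Suc k. g (Suc k + (Suc k - Suc i)))"
    by (rule sum.nat_diff_reindex[symmetric])
  also have "\<dots> = (\<Sum>i<Suc k. g i)"
  proof (rule sum.cong)
    fix i assume "i \<in> {..<Suc k}"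
    then have e1: "Suc k + (Suc k - Suc i) = 2*k+1-i" and e2: "2*k+1 - (2*k+1-i) = i" by auto
    show "g (Suc k + (Suc k - Suc i)) = g i" unfolding e1 g_def e2 by (simp add: mult.commute)
  qed simp
  finally show ?thesis by simp
qed



lemma b85_square: "\<exists>G. b_gen 2 8 5 = G * G"
proof -
  define R where "R = fps_right_inverse (eta_f 1 ^ 2 * eta_f (8 * 5) ^ 2) 1"
  define R1 where "R1 = fps_right_inverse (eta_f 1 * eta_f (8 * 5)) 1"
  have hR: "eta_f 1 ^ 2 * eta_f (8 * 5) ^ 2 * R = 1" unfolding R_def
    by (rule fps_right_inverse) (simp add: eta_nth0 fps_nth_power_0)
  have hR1: "eta_f 1 * eta_f (8 * 5) * R1 = 1" unfolding R1_def
    by (rule fps_right_inverse) (simp add: eta_nth0)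
  have "eta_f 1 ^ 2 * eta_f (8 * 5) ^ 2 * R = eta_f 1 ^ 2 * eta_f (8 * 5) ^ 2 * R1 ^ 2"
    unfolding hR using hR1 by algebra
  moreover have nz: "eta_f 1 ^ 2 * eta_f (8 * 5) ^ 2 \<noteq> 0" using fnz[of 1] fnz[of "8*5"] by simp
  ultimately have "R = R1 ^ 2" using cancel by blast
  then have "b_gen 2 8 5 = (eta_f 8 * eta_f 5 * R1) * (eta_f 8 * eta_f 5 * R1)"
    unfolding b_gen_def R_def[symmetric] by (simp add: power2_eq_square ac_simps)
  then show ?thesis by blast
qed

theorem mainTheorem16:
  fixes n :: nat
  assumes "n \<ge> 1"
  shows "[b 2 8 5 (4 * n + 1) = 2 * b 2 2 5 n] (mod 10)"
proof -
  define F where "F = eta_f 1 ^ 8"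
  define W where "W = fps_right_inverse F 1"
  define x where "x = b 2 8 5 (4 * n + 1)"
  define y where "y = b 2 2 5 n"
  define X where "X = (F * dil 8 W) $ (4*n+1)"
  define Y where "Y = (F * dil 2 W) $ n"
  have h1: "5 dvd (x - X)" unfolding x_def X_def b_def F_def W_def
    by (rule md5_nth[OF B_md5]) simp
  have h2: "5 dvd (y - Y)" unfolding y_def Y_def b_def F_def W_def
    by (rule md5_nth[OF B_md5]) simp
  have h3: "X = -8 * Y" unfolding X_def Y_def F_def by (rule dil_coeff)
  have h4: "even x"
  proof -
    obtain G where G: "b_gen 2 8 5 = G * G" using b85_square by blast
    have "4 * n + 1 = 2 * (2 * n) + 1" by simp
    then show ?thesis unfolding x_def b_def G by (metis sq_odd)
  qed
  from h1 h2 h3 h4 have "10 dvd (x - 2 * y)" by presburger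
  then show ?thesis unfolding x_def y_def by (simp add: cong_iff_dvd_diff)
qed


end
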